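(* Let $\alpha\ge0$ and $0\le\beta<1$. Every $f\in\mathcal{W}_{\mathcal{H}}^0(\alpha,\beta)$ is a close-to-convex harmonic mapping of $\mathbb{D}$; in particular it is univalent in $\mathbb{D}$.
   Context: Let $\mathbb{D}=\{z\in\mathbb{C}:|z|<1\}$. $\mathcal{H}^0$ denotes the class of harmonic maps $f=h+\overline{g}$ on $\mathbb{D}$, with $h,g$ analytic in $\mathbb{D}$, $h(z)=z+\sum_{n\ge2}a_nz^n$ and $g(z)=\sum_{n\ge2}b_nz^n$. For $\alpha\ge0$, $0\le\beta<1$, $\mathcal{W}_{\mathcal{H}}^0(\alpha,\beta)$ denotes the class of $f=h+\overline{g}\in\mathcal{H}^0$ such that $\Re\big(h'(z)+\alpha zh''(z)-\beta\big)>|g'(z)+\alpha zg''(z)|$ for all $z\in\mathbb{D}$. A harmonic map $f$ on $\mathbb{D}$ is close-to-convex if it is univalent and the complement of $f(\mathbb{D})$ can be written as a union of non-intersecting half-lines. *)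

theory Defs
  imports "HOL-Analysis.Analysis"
begin

abbreviation unit_disk :: "complex set" where
  "unit_disk \<equiv> ball 0 1"

text \<open>Class H^0: harmonic maps f = h + conj g with h, g analytic in the disk,
  h(z) = z + sum_{n>=2} a_n z^n, g(z) = sum_{n>=2} b_n z^n, i.e.
  h(0)=0, h'(0)=1, g(0)=0, g'(0)=0.  Represented by the pair (h,g).\<close>
definition class_H0 :: "(complex \<Rightarrow> complex) \<Rightarrow> (complex \<Rightarrow> complex) \<Rightarrow> bool" where
  "class_H0 h g \<longleftrightarrow> h holomorphic_on unit_disk \<and> g holomorphic_on unit_disk \<and>
     h 0 = 0 \<and> deriv h 0 = 1 \<and> g 0 = 0 \<and> deriv g 0 = 0"

definition class_WH0 :: "real \<Rightarrow> real \<Rightarrow> (complex \<Rightarrow> complex) \<Rightarrow> (complex \<Rightarrow> complex) \<Rightarrow> bool" where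
  "class_WH0 \<alpha> \<beta> h g \<longleftrightarrow> class_H0 h g \<and>
     (\<forall>z\<in>unit_disk. Re (deriv h z + of_real \<alpha> * z * deriv (deriv h) z - of_real \<beta>)
                     > cmod (deriv g z + of_real \<alpha> * z * deriv (deriv g) z))"

definition half_line :: "complex set \<Rightarrow> bool" where
  "half_line S \<longleftrightarrow> (\<exists>a d. d \<noteq> 0 \<and> S = {a + of_real t * d | t. t \<ge> 0})"

definition close_to_convex :: "(complex \<Rightarrow> complex) \<Rightarrow> bool" where
  "close_to_convex f \<longleftrightarrow> inj_on f unit_disk \<and>
     (\<exists>L. (\<forall>S\<in>L. half_line S) \<and> pairwise disjnt L \<and> \<Union>L = - (f ` unit_disk))"

end

theory Submission imports Defs "HOL-Complex_Analysis.Complex_Analysis" begin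

lemma first_zero:
  fixes u u' :: "real \<Rightarrow> real" and a :: real
  assumes du: "\<And>s. s \<in> {0..1} \<Longrightarrow> (u has_real_derivative u' s) (at s)"
    and u0: "u 0 > 0" and pos: "\<And>s. s \<in> {0..1} \<Longrightarrow> u s + a * s * u' s > 0" and a: "a \<ge> 0"
  shows "u 1 > 0"
proof (rule ccontr)
  assume "\<not> u 1 > 0"
  define S where "S = {0..1} \<inter> u -` {..0}"
  have cont: "continuous_on {0..1} u"
    using du by (meson DERIV_isCont continuous_at_imp_continuous_on)
  have cl: "closed S" unfolding S_def by (rule continuous_closed_preimage[OF cont]) auto
  have "1 \<in> S" using \<open>\<not> u 1 > 0\<close> unfolding S_def by auto
  hence ne: "S \<noteq> {}" by auto
  have bb: "bdd_below S" unfolding S_def by (rule bdd_belowI[of _ 0]) auto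
  define s1 where "s1 = Inf S"
  have s1S: "s1 \<in> S" using closed_contains_Inf[OF ne bb cl] s1_def by simp
  hence s1r: "s1 \<in> {0..1}" "u s1 \<le> 0" unfolding S_def by auto
  have s1p: "s1 > 0" using s1r u0 by (metis atLeastAtMost_iff less_eq_real_def not_le)
  have below: "u s > 0" if "0 \<le> s" "s < s1" for s
  proof (rule ccontr)
    assume "\<not> u s > 0"
    hence "s \<in> S" unfolding S_def using that s1r by auto
    hence "s1 \<le> s" unfolding s1_def by (rule cInf_lower[OF _ bb])
    thus False using that by simp
  qed
  have "u s1 + a * s1 * u' s1 > 0" using pos s1r by auto
  hence "a * s1 * u' s1 > 0" using s1r by linarith
  hence "u' s1 > 0" using a s1p by (metis mult_nonneg_nonneg not_le mult_nonneg_nonpos less_le_not_le zero_less_mult_iff)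
  then obtain d where d: "d > 0" "\<And>h. h > 0 \<Longrightarrow> h < d \<Longrightarrow> u (s1 - h) < u s1"
    using DERIV_pos_inc_left[OF du[OF s1r(1)]] by blast
  define h where "h = min (d/2) (s1/2)"
  have "u (s1 - h) < u s1" using d h_def s1p by auto
  moreover have "u (s1 - h) > 0" using below[of "s1 - h"] h_def s1p d by auto
  ultimately show False using s1r by linarith
qed

lemma rderiv:
  assumes "(F has_field_derivative D) (at (of_real t))"
  shows "((\<lambda>s. Re (F (of_real s))) has_real_derivative Re D) (at t)"
  using has_field_derivative_Re[OF has_vector_derivative_real_field[OF assms]] by simp

lemma key_ineq:
  fixes \<alpha> \<beta> :: real and h g :: "complex \<Rightarrow> complex"
  assumes a: "\<alpha> \<ge> 0" and W: "class_WH0 \<alpha> \<beta> h g" and z: "z \<in> unit_disk" and b1: "\<beta> < 1"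
  shows "Re (deriv h z) - \<beta> > cmod (deriv g z)"
proof -
  have hh: "h holomorphic_on unit_disk" and gh: "g holomorphic_on unit_disk"
    and h1: "deriv h 0 = 1" and g1: "deriv g 0 = 0"
    and cond: "\<And>w. w \<in> unit_disk \<Longrightarrow> Re (deriv h w + of_real \<alpha> * w * deriv (deriv h) w - of_real \<beta>)
                     > cmod (deriv g w + of_real \<alpha> * w * deriv (deriv g) w)"
    using W unfolding class_WH0_def class_H0_def by auto
  obtain \<epsilon> :: complex where e1: "cmod \<epsilon> = 1" and e2: "\<epsilon> * deriv g z = - of_real (cmod (deriv g z))"
  proof (cases "deriv g z = 0")
    case True thus ?thesis using that[of 1] by simp
  next
    case False
    let ?e = "- cnj (deriv g z) / of_real (cmod (deriv g z))"
    have "cmod ?e = 1" using False by (simp add: norm_divide)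
    moreover have "?e * deriv g z = - of_real (cmod (deriv g z))"
    proof -
      have "?e * deriv g z = - (deriv g z * cnj (deriv g z)) / of_real (cmod (deriv g z))" by (simp add: field_simps)
      also have "\<dots> = - (complex_of_real (cmod (deriv g z)) ^ 2) / of_real (cmod (deriv g z))" using complex_norm_square[of "deriv g z"] by simp
      also have "\<dots> = - of_real (cmod (deriv g z))" using False by (simp add: power2_eq_square)
      finally show ?thesis .
    qed
    ultimately show ?thesis using that by blast
  qed
  define q where "q w = deriv h w + \<epsilon> * deriv g w - of_real \<beta>" for w
  define q' where "q' w = deriv (deriv h) w + \<epsilon> * deriv (deriv g) w" for w
  have dq: "(q has_field_derivative q' w) (at w)" if "w \<in> unit_disk" for w
  proof -
    have d1: "(deriv h has_field_derivative deriv (deriv h) w) (at w)"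
      by (rule holomorphic_derivI[OF holomorphic_deriv[OF hh open_ball] open_ball that])
    have d2: "(deriv g has_field_derivative deriv (deriv g) w) (at w)"
      by (rule holomorphic_derivI[OF holomorphic_deriv[OF gh open_ball] open_ball that])
    have "((\<lambda>w. deriv h w + \<epsilon> * deriv g w - of_real \<beta>) has_field_derivative
         deriv (deriv h) w + \<epsilon> * deriv (deriv g) w - 0) (at w)"
      by (intro DERIV_diff DERIV_add DERIV_cmult d1 d2 DERIV_const)
    thus ?thesis unfolding q_def[abs_def] q'_def by simp
  qed
  define u where "u s = Re (q (of_real s * z))" for s
  define u' where "u' s = Re (q' (of_real s * z) * z)" for s
  have inD: "of_real s * z \<in> unit_disk" if "s \<in> {0..1}" for s
  proof -
    have "cmod (of_real s * z) = \<bar>s\<bar> * cmod z" by (simp add: norm_mult)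
    also have "\<dots> \<le> cmod z" using that by (auto intro: mult_left_le_one_le)
    finally show ?thesis using z by auto
  qed
  have du: "(u has_real_derivative u' s) (at s)" if "s \<in> {0..1}" for s
  proof -
    have "((\<lambda>x. q (x * z)) has_field_derivative q' (of_real s * z) * z) (at (of_real s))"
      by (rule DERIV_chain2[of q _ "\<lambda>x. x * z", OF dq[OF inD[OF that]]]) (auto intro!: derivative_eq_intros)
    thus ?thesis unfolding u_def u'_def by (rule rderiv)
  qed
  have u0: "u 0 > 0" unfolding u_def q_def using h1 g1 b1 by simp
  have pos: "u s + \<alpha> * s * u' s > 0" if "s \<in> {0..1}" for s
  proof -
    define w where "w = of_real s * z"
    have w: "w \<in> unit_disk" using inD[OF that] w_def by simp
    have eq: "u s + \<alpha> * s * u' s = Re (deriv h w + of_real \<alpha> * w * deriv (deriv h) w - of_real \<beta>)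
       + Re (\<epsilon> * (deriv g w + of_real \<alpha> * w * deriv (deriv g) w))"
      unfolding u_def u'_def q_def q'_def w_def by (simp add: algebra_simps)
    have "Re (\<epsilon> * (deriv g w + of_real \<alpha> * w * deriv (deriv g) w)) \<ge> - cmod (deriv g w + of_real \<alpha> * w * deriv (deriv g) w)"
      using abs_Re_le_cmod[of "\<epsilon> * (deriv g w + of_real \<alpha> * w * deriv (deriv g) w)"] e1
      by (simp add: norm_mult)
    thus ?thesis using eq cond[OF w] by linarith
  qed
  have "u 1 > 0" by (rule first_zero[OF du u0 pos a])
  moreover have "u 1 = Re (deriv h z) - cmod (deriv g z) - \<beta>"
    unfolding u_def q_def using e2 by simp
  ultimately show ?thesis by simp
qed

lemma seg_in_disk:
  assumes "z1 \<in> unit_disk" "z2 \<in> unit_disk" "t \<in> {0..1}"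
  shows "z1 + of_real t * (z2 - z1) \<in> unit_disk"
proof -
  have e: "z1 + of_real t * (z2 - z1) = (1 - t) *\<^sub>R z1 + t *\<^sub>R z2"
    by (simp add: scaleR_conv_of_real algebra_simps)
  show ?thesis unfolding e using assms convex_ball[of "0::complex" 1]
    by (auto simp: convex_alt)
qed

lemma strict_monotone:
  fixes h g :: "complex \<Rightarrow> complex"
  assumes hh: "h holomorphic_on unit_disk" and gh: "g holomorphic_on unit_disk"
    and key: "\<And>w. w \<in> unit_disk \<Longrightarrow> Re (deriv h w) > cmod (deriv g w)"
    and z1: "z1 \<in> unit_disk" and z2: "z2 \<in> unit_disk" and ne: "z1 \<noteq> z2"
  shows "Re (cnj (z2 - z1) * ((h z2 + cnj (g z2)) - (h z1 + cnj (g z1)))) > 0"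
proof -
  define v where "v = z2 - z1"
  have vne: "v \<noteq> 0" using ne v_def by simp
  define \<phi> where "\<phi> t = Re (cnj v * h (z1 + of_real t * v)) + Re (v * g (z1 + of_real t * v))" for t
  have der: "\<exists>y. (\<phi> has_real_derivative y) (at t) \<and> y > 0" if t: "0 \<le> t" "t \<le> 1" for t
  proof -
    define w where "w = z1 + of_real t * v"
    have w: "w \<in> unit_disk" unfolding w_def v_def using seg_in_disk[OF z1 z2] t by auto
    have dh: "(h has_field_derivative deriv h w) (at w)" by (rule holomorphic_derivI[OF hh open_ball w])
    have dg: "(g has_field_derivative deriv g w) (at w)" by (rule holomorphic_derivI[OF gh open_ball w])
    have d1: "((\<lambda>x. cnj v * h (z1 + x * v)) has_field_derivative cnj v * (deriv h w * v)) (at (of_real t))"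
      by (intro DERIV_cmult DERIV_chain2[of h _ "\<lambda>x. z1 + x * v"])
         (use dh w_def in \<open>auto intro!: derivative_eq_intros\<close>)
    have d2: "((\<lambda>x. v * g (z1 + x * v)) has_field_derivative v * (deriv g w * v)) (at (of_real t))"
      by (intro DERIV_cmult DERIV_chain2[of g _ "\<lambda>x. z1 + x * v"])
         (use dg w_def in \<open>auto intro!: derivative_eq_intros\<close>)
    have "(\<phi> has_real_derivative Re (cnj v * (deriv h w * v)) + Re (v * (deriv g w * v))) (at t)"
      unfolding \<phi>_def[abs_def] by (intro DERIV_add rderiv d1 d2)
    moreover have "Re (cnj v * (deriv h w * v)) + Re (v * (deriv g w * v)) > 0"
    proof -
      have "cnj v * (deriv h w * v) = (v * cnj v) * deriv h w" by (simp add: algebra_simps)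
      also have "\<dots> = of_real ((cmod v)^2) * deriv h w" by (simp only: complex_norm_square[symmetric] of_real_power)
      finally have "cnj v * (deriv h w * v) = of_real ((cmod v)^2) * deriv h w" .
      moreover have "Re (of_real ((cmod v)^2) * deriv h w) = (cmod v)^2 * Re (deriv h w)"
        by (metis scaleR_complex.sel(1) scaleR_conv_of_real)
      ultimately have a: "Re (cnj v * (deriv h w * v)) = (cmod v)^2 * Re (deriv h w)" by metis
      have b: "Re (v * (deriv g w * v)) \<ge> - ((cmod v)^2 * cmod (deriv g w))"
      proof -
        have c: "cmod (v * (deriv g w * v)) = (cmod v)^2 * cmod (deriv g w)" by (simp add: norm_mult power2_eq_square)
        have "- cmod (v * (deriv g w * v)) \<le> Re (v * (deriv g w * v))"
          by (metis abs_Re_le_cmod abs_le_iff minus_le_iff)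
        thus ?thesis by (simp only: c)
      qed
      have "(cmod v)^2 > 0" using vne by simp
      hence "(cmod v)^2 * cmod (deriv g w) < (cmod v)^2 * Re (deriv h w)" using key[OF w] by simp
      thus ?thesis using a b by linarith
    qed
    ultimately show ?thesis by blast
  qed
  have "\<phi> 0 < \<phi> 1" by (rule DERIV_pos_imp_increasing[of 0 1]) (use der in auto)
  moreover have "Re (cnj (z2 - z1) * ((h z2 + cnj (g z2)) - (h z1 + cnj (g z1)))) = \<phi> 1 - \<phi> 0"
  proof -
    have "Re (cnj v * cnj (g z2 - g z1)) = Re (v * (g z2 - g z1))"
      by (metis complex_cnj_mult complex_cnj_cnj cnj.sel(1))
    thus ?thesis unfolding \<phi>_def v_def by (simp add: algebra_simps)
  qed
  ultimately show ?thesis by simp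
qed

lemma exists_r:
  fixes f :: "complex \<Rightarrow> complex"
  assumes contf: "continuous_on unit_disk f"
    and mono: "\<And>z1 z2. z1 \<in> unit_disk \<Longrightarrow> z2 \<in> unit_disk \<Longrightarrow> z1 \<noteq> z2 \<Longrightarrow>
                 Re (cnj (z2 - z1) * (f z2 - f z1)) > 0"
    and u: "u \<notin> f ` unit_disk" and r: "0 < r" "r < 1"
  shows "\<exists>p. cmod p = 1 \<and> (\<forall>z\<in>unit_disk. 0 \<le> Re (cnj (z - p) * (f (of_real r * z) - u)))"
proof -
  define Y where "Y x = x - f (of_real r * x) + u" for x
  define \<Phi> where "\<Phi> x = Y x / of_real (max 1 (cmod (Y x)))" for x
  have rin: "of_real r * x \<in> unit_disk" if "x \<in> cball 0 1" for x
  proof -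
    have "cmod (of_real r * x) = r * cmod x" using r by (simp add: norm_mult)
    also have "\<dots> \<le> r" using that r by (intro mult_left_le) auto
    also have "\<dots> < 1" using r by simp
    finally show ?thesis by simp
  qed
  have cY: "continuous_on (cball 0 1) Y"
  proof -
    have "continuous_on (cball 0 1) (\<lambda>x. f (of_real r * x))"
      by (rule continuous_on_compose2[OF contf]) (auto intro!: continuous_intros rin)
    thus ?thesis unfolding Y_def by (intro continuous_intros)
  qed
  have cPhi: "continuous_on (cball 0 1) \<Phi>"
    unfolding \<Phi>_def by (intro continuous_intros cY) auto
  have Phi_in: "\<Phi> ` cball 0 1 \<subseteq> cball 0 1"
  proof
    fix y assume "y \<in> \<Phi> ` cball 0 1"
    then obtain x where y: "y = \<Phi> x" by auto
    have "cmod y = cmod (Y x) / max 1 (cmod (Y x))" unfolding y \<Phi>_def by (simp add: norm_divide)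
    also have "\<dots> \<le> 1" by (simp add: divide_le_eq_1 less_max_iff_disj)
    finally show "y \<in> cball 0 1" by simp
  qed
  obtain p where p: "p \<in> cball 0 1" "\<Phi> p = p"
    using brouwer[OF compact_cball convex_cball _ cPhi] Phi_in by (auto simp: image_subset_iff_funcset)
  have big: "cmod (Y p) > 1"
  proof (rule ccontr)
    assume "\<not> cmod (Y p) > 1"
    hence "\<Phi> p = Y p" unfolding \<Phi>_def by simp
    hence "f (of_real r * p) = u" using p unfolding Y_def by simp
    thus False using u rin[OF p(1)] by auto
  qed
  define s where "s = cmod (Y p) - 1"
  have s: "s > 0" using big s_def by simp
  have pY: "p = Y p / of_real (cmod (Y p))" using p(2) big unfolding \<Phi>_def by simp
  have p1: "cmod p = 1" using big by (subst pY) (auto simp: norm_divide)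
  have uf: "u - f (of_real r * p) = of_real s * p"
  proof -
    have "u - f (of_real r * p) = Y p - p" unfolding Y_def by simp
    also have "\<dots> = of_real s * p"
    proof -
      define c where "c = cmod (Y p)"
      have c: "c > 1" using big c_def by simp
      have "Y p - Y p / of_real c = of_real (c - 1) * (Y p / of_real c)"
        using c by (simp add: field_simps)
      thus ?thesis using pY unfolding s_def c_def[symmetric] by metis
    qed
    finally show ?thesis .
  qed
  have "0 \<le> Re (cnj (z - p) * (f (of_real r * z) - u))" if z: "z \<in> unit_disk" for z
  proof -
    have zp: "z \<noteq> p" using z p1 by auto
    have "Re (cnj (of_real r * z - of_real r * p) * (f (of_real r * z) - f (of_real r * p))) > 0"
      using mono[OF rin[OF p(1)] rin] z zp r by auto
    hence A: "Re (cnj (z - p) * (f (of_real r * z) - f (of_real r * p))) > 0"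
    proof -
      assume H: "Re (cnj (of_real r * z - of_real r * p) * (f (of_real r * z) - f (of_real r * p))) > 0"
      have "cnj (of_real r * z - of_real r * p) * (f (of_real r * z) - f (of_real r * p))
          = of_real r * (cnj (z - p) * (f (of_real r * z) - f (of_real r * p)))"
        by (simp add: algebra_simps)
      hence "r * Re (cnj (z - p) * (f (of_real r * z) - f (of_real r * p))) > 0"
        using H by (metis scaleR_complex.sel(1) scaleR_conv_of_real)
      thus ?thesis using r by (simp add: zero_less_mult_iff)
    qed
    have B: "Re (cnj (z - p) * p) \<le> 0"
    proof -
      have "Re (cnj (z - p) * p) = Re (cnj z * p) - ((Re p)^2 + (Im p)^2)"
        by (simp add: algebra_simps power2_eq_square)
      also have "(Re p)^2 + (Im p)^2 = (cmod p)^2" by (simp add: cmod_power2)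
      finally have "Re (cnj (z - p) * p) = Re (cnj z * p) - (cmod p)^2" .
      moreover have "Re (cnj z * p) \<le> cmod z * cmod p"
        using complex_Re_le_cmod[of "cnj z * p"] by (simp add: norm_mult)
      ultimately show ?thesis using p1 z by simp
    qed
    have "f (of_real r * z) - u = (f (of_real r * z) - f (of_real r * p)) - (u - f (of_real r * p))"
      by simp
    also have "\<dots> = (f (of_real r * z) - f (of_real r * p)) - of_real s * p" by (simp only: uf)
    finally have "f (of_real r * z) - u = (f (of_real r * z) - f (of_real r * p)) - of_real s * p" .
    moreover have gen: "\<And>X. Re (cnj (z - p) * (X - of_real s * p)) = Re (cnj (z - p) * X) - s * Re (cnj (z - p) * p)"
      by (simp add: algebra_simps)
    ultimately have "Re (cnj (z - p) * (f (of_real r * z) - u)) =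
        Re (cnj (z - p) * (f (of_real r * z) - f (of_real r * p))) - s * Re (cnj (z - p) * p)"
      by (simp only:)
    moreover have "s * Re (cnj (z - p) * p) \<le> 0" using s B by (simp add: mult_nonneg_nonpos)
    ultimately show ?thesis using A by linarith
  qed
  thus ?thesis using p1 by blast
qed

lemma exists_lim:
  fixes f :: "complex \<Rightarrow> complex"
  assumes contf: "continuous_on unit_disk f"
    and mono: "\<And>z1 z2. z1 \<in> unit_disk \<Longrightarrow> z2 \<in> unit_disk \<Longrightarrow> z1 \<noteq> z2 \<Longrightarrow>
                 Re (cnj (z2 - z1) * (f z2 - f z1)) > 0"
    and u: "u \<notin> f ` unit_disk"
  shows "\<exists>p. cmod p = 1 \<and> (\<forall>z\<in>unit_disk. 0 \<le> Re (cnj (z - p) * (f z - u)))"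
proof -
  define rr where "rr n = 1 - inverse (real (Suc n)) / 2" for n
  have rr: "0 < rr n" "rr n < 1" for n
  proof -
    have "inverse (real (Suc n)) \<le> 1" "inverse (real (Suc n)) > 0" by (auto simp: field_simps)
    thus "0 < rr n" "rr n < 1" unfolding rr_def by auto
  qed
  have "\<forall>n. \<exists>p. cmod p = 1 \<and> (\<forall>z\<in>unit_disk. 0 \<le> Re (cnj (z - p) * (f (of_real (rr n) * z) - u)))"
    using exists_r[OF contf mono u rr] by blast
  then obtain P where P: "\<And>n. cmod (P n) = 1"
    "\<And>n z. z \<in> unit_disk \<Longrightarrow> 0 \<le> Re (cnj (z - P n) * (f (of_real (rr n) * z) - u))"
    by metis
  have "\<forall>n. P n \<in> sphere 0 1" using P(1) by simp
  then obtain l \<sigma> where l: "l \<in> sphere 0 1" "strict_mono \<sigma>" "(P \<circ> \<sigma>) \<longlonglongrightarrow> l"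
    using seq_compactE[OF compact_imp_seq_compact[OF compact_sphere]] by metis
  have rr1: "rr \<longlonglongrightarrow> 1"
  proof -
    have "(\<lambda>n. 1 - inverse (real (Suc n)) / 2) \<longlonglongrightarrow> 1 - 0 / 2"
      by (intro tendsto_intros LIMSEQ_inverse_real_of_nat) simp
    thus ?thesis unfolding rr_def[abs_def] by simp
  qed
  have "0 \<le> Re (cnj (z - l) * (f z - u))" if z: "z \<in> unit_disk" for z
  proof -
    have ic: "isCont f z" using contf z by (simp add: continuous_on_eq_continuous_at)
    have "(\<lambda>n. rr (\<sigma> n)) \<longlonglongrightarrow> 1" using LIMSEQ_subseq_LIMSEQ[OF rr1 l(2)] by (simp add: comp_def)
    hence "(\<lambda>n. of_real (rr (\<sigma> n)) * z) \<longlonglongrightarrow> of_real 1 * z" by (intro tendsto_intros)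
    hence "(\<lambda>n. f (of_real (rr (\<sigma> n)) * z)) \<longlonglongrightarrow> f z" using isCont_tendsto_compose[OF ic] by simp
    moreover have "(\<lambda>n. P (\<sigma> n)) \<longlonglongrightarrow> l" using l(3) by (simp add: comp_def)
    ultimately have "(\<lambda>n. Re (cnj (z - P (\<sigma> n)) * (f (of_real (rr (\<sigma> n)) * z) - u))) \<longlonglongrightarrow> Re (cnj (z - l) * (f z - u))"
      by (intro tendsto_intros)
    thus ?thesis by (rule LIMSEQ_le_const) (use P(2)[OF z] in auto)
  qed
  thus ?thesis using l(1) by auto
qed

lemma Re_cnj_diff_p:
  assumes p: "cmod p = 1" and z: "z \<in> unit_disk"
  shows "Re (cnj (z - p) * p) < 0"
proof -
  have "Re (cnj (z - p) * p) = Re (cnj z * p) - ((Re p)^2 + (Im p)^2)"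
    by (simp add: algebra_simps power2_eq_square)
  also have "(Re p)^2 + (Im p)^2 = (cmod p)^2" by (simp add: cmod_power2)
  finally have e: "Re (cnj (z - p) * p) = Re (cnj z * p) - (cmod p)^2" .
  have "Re (cnj z * p) \<le> cmod z * cmod p"
    using complex_Re_le_cmod[of "cnj z * p"] by (simp add: norm_mult)
  thus ?thesis using e p z by simp
qed

lemma Re_scale: "Re (cnj (of_real c * w) * X) = c * Re (cnj w * X)"
  by (simp add: algebra_simps)

lemma Re_shift: "Re (cnj w * (X - of_real c * Y)) = Re (cnj w * X) - c * Re (cnj w * Y)"
  by (simp add: algebra_simps)

lemma cnj_unit: "cmod p = 1 \<Longrightarrow> cnj p * p = 1"
  using complex_norm_square[of p] by (simp add: mult.commute)

lemma line_eq:
  assumes "v = u + of_real c * d"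
  shows "{u + of_real t * d | t. True} = {v + of_real t * d | t. True}"
proof safe
  fix t show "\<exists>s. u + of_real t * d = v + of_real s * d \<and> True"
    by (rule exI[of _ "t - c"]) (simp add: assms algebra_simps)
next
  fix t show "\<exists>s. v + of_real t * d = u + of_real s * d \<and> True"
    by (rule exI[of _ "t + c"]) (simp add: assms algebra_simps)
qed

lemma ctc_abstract:
  fixes f :: "complex \<Rightarrow> complex"
  assumes contf: "continuous_on unit_disk f"
    and mono: "\<And>z1 z2. z1 \<in> unit_disk \<Longrightarrow> z2 \<in> unit_disk \<Longrightarrow> z1 \<noteq> z2 \<Longrightarrow>
                 Re (cnj (z2 - z1) * (f z2 - f z1)) > 0"
    and f0: "f 0 = 0"
  shows "close_to_convex f"
proof -
  define A where "A p = {u. \<forall>z\<in>unit_disk. 0 \<le> Re (cnj (z - p) * (f z - u))}" for p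
  have A_out: "u \<notin> f ` unit_disk" if p: "cmod p = 1" and u: "u \<in> A p" for p u
  proof
    assume "u \<in> f ` unit_disk"
    then obtain z where z: "z \<in> unit_disk" "u = f z" by auto
    define z' where "z' = (z + p) / 2"
    have "cmod (z + p) \<le> cmod z + cmod p" by (rule norm_triangle_ineq)
    hence z'D: "z' \<in> unit_disk" using z p unfolding z'_def by (simp add: norm_divide)
    have "z \<noteq> p" using z p by auto
    hence ne: "z \<noteq> z'" unfolding z'_def by (auto simp: field_simps)
    have m: "Re (cnj (z' - z) * (f z' - f z)) > 0" by (rule mono[OF z(1) z'D ne])
    have a: "0 \<le> Re (cnj (z' - p) * (f z' - u))" using u z'D unfolding A_def by auto
    have e: "z' - p = of_real (-1) * (z' - z)" unfolding z'_def by (simp add: field_simps)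
    have "Re (cnj (z' - p) * (f z' - u)) = (-1) * Re (cnj (z' - z) * (f z' - f z))"
      unfolding e z(2) Re_scale ..
    hence "Re (cnj (z' - p) * (f z' - u)) = - Re (cnj (z' - z) * (f z' - f z))" by simp
    thus False using m a by linarith
  qed
  have A_uniq: "p = q" if p: "cmod p = 1" and q: "cmod q = 1" and up: "u \<in> A p" and uq: "u \<in> A q" for p q u
  proof (rule ccontr)
    assume pq: "p \<noteq> q"
    have par: "(cmod (p + q))^2 + (cmod (p - q))^2 = 2 * (cmod p)^2 + 2 * (cmod q)^2"
      by (simp only: cmod_power2) (simp add: power2_eq_square algebra_simps)
    have pos: "(cmod (p - q))^2 > 0" using pq by simp
    have par4: "(cmod (p + q))^2 + (cmod (p - q))^2 = 4" using par p q by simp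
    have "(cmod (p + q))^2 < (2::real)^2" using pos par4 by (simp only: power2_eq_square[of "2::real"])
    hence pq2: "cmod (p + q) < 2" by (rule power_less_imp_less_base) simp
    define z1 where "z1 = (p + q) / 2"
    define z2 where "z2 = (z1 + q) / 2"
    have z1D: "z1 \<in> unit_disk" using pq2 unfolding z1_def by (simp add: norm_divide)
    have "cmod (z1 + q) \<le> cmod z1 + cmod q" by (rule norm_triangle_ineq)
    hence z2D: "z2 \<in> unit_disk" using z1D q unfolding z2_def by (simp add: norm_divide)
    have zero: "Re (cnj (q - p) * (f z - u)) = 0" if zD: "z \<in> unit_disk" and zl: "z = p + of_real l * (q - p)"
       and l: "0 < l" "l < 1" for z l
    proof -
      have e1: "z - p = of_real l * (q - p)" using zl by simp
      have e2: "z - q = of_real (l - 1) * (q - p)" using zl by (simp add: algebra_simps)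
      have "0 \<le> Re (cnj (z - p) * (f z - u))" using up zD unfolding A_def by auto
      hence "0 \<le> l * Re (cnj (q - p) * (f z - u))" unfolding e1 Re_scale .
      hence i1: "0 \<le> Re (cnj (q - p) * (f z - u))" using l by (simp add: zero_le_mult_iff)
      have "0 \<le> Re (cnj (z - q) * (f z - u))" using uq zD unfolding A_def by auto
      hence "0 \<le> (l - 1) * Re (cnj (q - p) * (f z - u))" unfolding e2 Re_scale .
      hence "Re (cnj (q - p) * (f z - u)) \<le> 0" using l by (simp add: zero_le_mult_iff)
      thus ?thesis using i1 by simp
    qed
    have r1: "Re (cnj (q - p) * (f z1 - u)) = 0"
      by (rule zero[OF z1D, of "1/2"]) (auto simp: z1_def field_simps)
    have r2: "Re (cnj (q - p) * (f z2 - u)) = 0"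
      by (rule zero[OF z2D, of "3/4"]) (auto simp: z2_def z1_def field_simps)
    have "z2 - z1 = of_real (1/4) * (q - p)" unfolding z2_def z1_def by (simp add: field_simps)
    moreover have "z1 \<noteq> z2" using pq unfolding z2_def z1_def by (auto simp: field_simps)
    hence "Re (cnj (z2 - z1) * (f z2 - f z1)) > 0" by (rule mono[OF z1D z2D])
    ultimately have "(1/4) * Re (cnj (q - p) * (f z2 - f z1)) > 0" using Re_scale by metis
    moreover have "Re (cnj (q - p) * (f z2 - f z1)) = Re (cnj (q - p) * (f z2 - u)) - Re (cnj (q - p) * (f z1 - u))"
      by (simp add: algebra_simps)
    ultimately show False using r1 r2 by simp
  qed
  have A_shift: "u + of_real t * p \<in> A p" if p: "cmod p = 1" and u: "u \<in> A p" and t: "t \<ge> 0" for p u t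
    unfolding A_def
  proof safe
    fix z assume z: "z \<in> unit_disk"
    have "f z - (u + of_real t * p) = (f z - u) - of_real t * p" by simp
    hence "Re (cnj (z - p) * (f z - (u + of_real t * p))) = Re (cnj (z - p) * (f z - u)) - t * Re (cnj (z - p) * p)"
      using Re_shift by metis
    moreover have "0 \<le> Re (cnj (z - p) * (f z - u))" using u z unfolding A_def by auto
    moreover have "t * Re (cnj (z - p) * p) \<le> 0"
      using Re_cnj_diff_p[OF p z] t by (simp add: mult_nonneg_nonpos)
    ultimately show "0 \<le> Re (cnj (z - p) * (f z - (u + of_real t * p)))" by linarith
  qed
  have A_low: "0 \<le> Re (cnj p * u)" if "u \<in> A p" for p u
  proof -
    have "0 \<le> Re (cnj (0 - p) * (f 0 - u))" using that unfolding A_def mem_Collect_eq by (rule bspec) simp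
    thus ?thesis using f0 by simp
  qed
  have A_closed: "closed (A p)" for p
  proof -
    have "A p = (\<Inter>z\<in>unit_disk. {u. 0 \<le> Re (cnj (z - p) * (f z - u))})" by (auto simp: A_def)
    moreover have "closed {u. 0 \<le> Re (cnj (z - p) * (f z - u))}" for z
      by (intro closed_Collect_le continuous_intros)
    ultimately show ?thesis by auto
  qed
  have cover: "\<exists>p. cmod p = 1 \<and> u \<in> A p" if "u \<notin> f ` unit_disk" for u
    using exists_lim[OF contf mono that] unfolding A_def by auto
  define K where "K = - (f ` unit_disk)"
  define sel where "sel u = (SOME p. cmod p = 1 \<and> u \<in> A p)" for u
  have sel: "cmod (sel u) = 1 \<and> u \<in> A (sel u)" if "u \<in> K" for u
    unfolding sel_def by (rule someI_ex) (use cover that K_def in auto)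
  define H where "H u = A (sel u) \<inter> {u + of_real t * sel u | t. True}" for u
  have Hmem: "u \<in> H u" if "u \<in> K" for u
    unfolding H_def using sel[OF that] by (auto intro!: exI[of _ 0])
  have Hsub: "H u \<subseteq> K" if "u \<in> K" for u
    unfolding H_def K_def using A_out sel[OF that] by auto
  have Hhalf: "half_line (H u)" if uK: "u \<in> K" for u
  proof -
    define p where "p = sel u"
    have p: "cmod p = 1" "u \<in> A p" using sel[OF uK] p_def by auto
    define T where "T = {t::real. u + of_real t * p \<in> A p}"
    have Tcl: "closed T"
    proof -
      have "T = (\<lambda>t. u + of_real t * p) -` A p" unfolding T_def by auto
      thus ?thesis by (auto intro!: closed_vimage A_closed continuous_intros)
    qed
    have T0: "0 \<in> T" using p unfolding T_def by simp
    have Tlow: "- Re (cnj p * u) \<le> t" if "t \<in> T" for t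
    proof -
      have "0 \<le> Re (cnj p * (u + of_real t * p))" using A_low that unfolding T_def by blast
      also have "cnj p * (u + of_real t * p) = cnj p * u + of_real t * (cnj p * p)" by (simp add: algebra_simps)
      also have "\<dots> = cnj p * u + of_real t" using cnj_unit[OF p(1)] by simp
      finally show ?thesis by simp
    qed
    have bb: "bdd_below T" by (rule bdd_belowI[of _ "- Re (cnj p * u)"]) (rule Tlow)
    define t0 where "t0 = Inf T"
    have t0T: "t0 \<in> T" unfolding t0_def by (rule closed_contains_Inf) (use T0 bb Tcl in auto)
    have Teq: "t \<in> T \<longleftrightarrow> t0 \<le> t" for t
    proof
      assume "t \<in> T" thus "t0 \<le> t" unfolding t0_def by (rule cInf_lower[OF _ bb])
    next
      assume "t0 \<le> t"
      hence "(u + of_real t0 * p) + of_real (t - t0) * p \<in> A p"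
        using A_shift[OF p(1), of "u + of_real t0 * p" "t - t0"] t0T unfolding T_def by simp
      thus "t \<in> T" unfolding T_def by (simp add: algebra_simps)
    qed
    have "H u = {(u + of_real t0 * p) + of_real s * p | s. s \<ge> 0}"
    proof safe
      fix x assume "x \<in> H u"
      then obtain t where t: "x = u + of_real t * p" "u + of_real t * p \<in> A p"
        unfolding H_def p_def by auto
      hence "t0 \<le> t" using Teq unfolding T_def by auto
      thus "\<exists>s. x = u + of_real t0 * p + of_real s * p \<and> 0 \<le> s"
        by (intro exI[of _ "t - t0"]) (simp add: t algebra_simps)
    next
      fix s :: real assume s: "0 \<le> s"
      hence "t0 + s \<in> T" using Teq by simp
      hence "u + of_real (t0 + s) * p \<in> A p" unfolding T_def by simp
      moreover have "u + of_real (t0 + s) * p = u + of_real t0 * p + of_real s * p" by (simp add: algebra_simps)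
      ultimately have "u + of_real t0 * p + of_real s * p \<in> A p" by metis
      moreover have "u + of_real t0 * p + of_real s * p \<in> {u + of_real t * p | t. True}"
        by (rule CollectI, rule exI[of _ "t0 + s"]) (simp add: algebra_simps)
      ultimately show "u + of_real t0 * p + of_real s * p \<in> H u"
        unfolding H_def p_def[symmetric] by blast
    qed
    thus ?thesis unfolding half_line_def using p(1) by (intro exI[of _ "u + of_real t0 * p"] exI[of _ p]) auto
  qed
  have Hdisj: "H u1 = H u2" if u1: "u1 \<in> K" and u2: "u2 \<in> K" and v1: "v \<in> H u1" and v2: "v \<in> H u2" for u1 u2 v
  proof -
    have "sel u1 = sel u2"
      using A_uniq[of "sel u1" "sel u2" v] sel[OF u1] sel[OF u2] v1 v2 unfolding H_def by auto
    moreover obtain t1 where "v = u1 + of_real t1 * sel u1" using v1 unfolding H_def by auto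
    moreover obtain t2 where "v = u2 + of_real t2 * sel u2" using v2 unfolding H_def by auto
    ultimately show ?thesis unfolding H_def using line_eq by metis
  qed
  have inj: "inj_on f unit_disk"
  proof (rule inj_onI, rule ccontr)
    fix x y assume "x \<in> unit_disk" "y \<in> unit_disk" "f x = f y" "x \<noteq> y"
    thus False using mono[of x y] by simp
  qed
  show ?thesis unfolding close_to_convex_def
  proof (intro conjI inj exI[of _ "H ` K"])
    show "\<forall>S\<in>H ` K. half_line S" using Hhalf by auto
    show "pairwise disjnt (H ` K)"
      unfolding pairwise_def disjnt_def using Hdisj by blast
    show "\<Union> (H ` K) = - f ` unit_disk"
      using Hmem Hsub unfolding K_def by blast
  qed
qed

theorem theorem2p4:
  fixes \<alpha> \<beta> :: real and h g :: "complex \<Rightarrow> complex"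
  assumes "\<alpha> \<ge> 0" and "0 \<le> \<beta>" and "\<beta> < 1"
    and "class_WH0 \<alpha> \<beta> h g"
  shows "close_to_convex (\<lambda>z. h z + cnj (g z)) \<and> inj_on (\<lambda>z. h z + cnj (g z)) unit_disk"
proof -
  have hh: "h holomorphic_on unit_disk" and gh: "g holomorphic_on unit_disk"
    and h0: "h 0 = 0" and g0: "g 0 = 0"
    using assms(4) unfolding class_WH0_def class_H0_def by auto
  have key: "Re (deriv h w) > cmod (deriv g w)" if "w \<in> unit_disk" for w
    using key_ineq[OF assms(1) assms(4) that assms(3)] assms(2) by linarith
  have contf: "continuous_on unit_disk (\<lambda>z. h z + cnj (g z))"
    using holomorphic_on_imp_continuous_on[OF hh] holomorphic_on_imp_continuous_on[OF gh]
    by (intro continuous_intros) auto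
  have ctc: "close_to_convex (\<lambda>z. h z + cnj (g z))"
    by (rule ctc_abstract[OF contf strict_monotone[OF hh gh key]]) (auto simp: h0 g0)
  thus ?thesis unfolding close_to_convex_def by blast
qed

end
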